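(* Let $S\subseteq(0,1)$ be open, $f:S\to(0,1)$ differentiable, and consider a (possibly randomized) Bernoulli factory for $f$ that is fast. Then for every $p\in S$, $$\mathbb E[N]\ \ge\ (f'(p))^2\,\frac{p(1-p)}{f(p)(1-f(p))}.$$
   Context: Let $X=(X_i)$ be i.i.d. Bernoulli with parameter $p\in S$ and $U=(U_i)$ i.i.d. uniform on $(0,1)$, independent of $X$. A (possibly randomized) Bernoulli factory for $f$ consists of measurable stopping functions $\tau_i(x_1,u_1;\dots;x_i,u_i)\in\{0,1\}$ and measurable output functions $\gamma_n(x_1,u_1;\dots;x_n,u_n)\in\{0,1\}$; $N=\min\{i:\tau_i(X_1,U_1;\dots;X_i,U_i)=1\}$ is assumed finite almost surely, and the output $Y=\gamma_N(X_1,U_1;\dots;X_N,U_N)$ satisfies $\Pr[Y=1]=f(p)$ for all $p\in S$. The factory is fast if for every $p\in S$ there exist $A>0$, $\beta<1$ with $\Pr[N>n]\le A\beta^n$ for all $n$. *)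

theory Defs
  imports "HOL-Probability.Probability"
begin

text \<open>Sample points: omega i = (X_{i+1}, U_{i+1}), i.e. index i (from 0) holds the (i+1)-th
  Bernoulli/uniform pair.\<close>

definition bf_space :: "real \<Rightarrow> (nat \<Rightarrow> bool \<times> real) measure" where
  "bf_space p = PiM UNIV (\<lambda>_. measure_pmf (bernoulli_pmf p) \<Otimes>\<^sub>M uniform_measure lborel {0<..<(1::real)})"

definition prefix_space :: "nat \<Rightarrow> (nat \<Rightarrow> bool \<times> real) measure" where
  "prefix_space i = PiM {..<i} (\<lambda>_. count_space UNIV \<Otimes>\<^sub>M (borel :: real measure))"

definition stop_time :: "(nat \<Rightarrow> (nat \<Rightarrow> bool \<times> real) \<Rightarrow> bool) \<Rightarrow> (nat \<Rightarrow> bool \<times> real) \<Rightarrow> enat" where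
  "stop_time \<tau> \<omega> =
     (if \<exists>i\<ge>1. \<tau> i (restrict \<omega> {..<i})
      then enat (LEAST i. i \<ge> 1 \<and> \<tau> i (restrict \<omega> {..<i}))
      else \<infinity>)"

definition bernoulli_factory ::
  "real set \<Rightarrow> (real \<Rightarrow> real) \<Rightarrow> (nat \<Rightarrow> (nat \<Rightarrow> bool \<times> real) \<Rightarrow> bool)
     \<Rightarrow> (nat \<Rightarrow> (nat \<Rightarrow> bool \<times> real) \<Rightarrow> bool) \<Rightarrow> bool" where
  "bernoulli_factory S f \<tau> \<gamma> \<longleftrightarrow>
     (\<forall>i. \<tau> i \<in> prefix_space i \<rightarrow>\<^sub>M count_space UNIV) \<and>
     (\<forall>n. \<gamma> n \<in> prefix_space n \<rightarrow>\<^sub>M count_space UNIV) \<and>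
     (\<forall>p\<in>S. AE \<omega> in bf_space p. stop_time \<tau> \<omega> \<noteq> \<infinity>) \<and>
     (\<forall>p\<in>S. measure (bf_space p)
         {\<omega> \<in> space (bf_space p). \<exists>n. stop_time \<tau> \<omega> = enat n \<and> \<gamma> n (restrict \<omega> {..<n})} = f p)"

definition fast_factory :: "real set \<Rightarrow> (nat \<Rightarrow> (nat \<Rightarrow> bool \<times> real) \<Rightarrow> bool) \<Rightarrow> bool" where
  "fast_factory S \<tau> \<longleftrightarrow>
     (\<forall>p\<in>S. \<exists>A>0. \<exists>\<beta><1. \<forall>n::nat.
        measure (bf_space p) {\<omega> \<in> space (bf_space p). stop_time \<tau> \<omega> > enat n} \<le> A * \<beta> ^ n)"

end

theory Submission
  imports Defs
begin

definition Mp :: "real \<Rightarrow> (bool \<times> real) measure" where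
  "Mp p = measure_pmf (bernoulli_pmf p) \<Otimes>\<^sub>M uniform_measure lborel {0<..<(1::real)}"

lemma bf_space_Mp: "bf_space p = PiM UNIV (\<lambda>_. Mp p)"
  by (simp add: bf_space_def Mp_def)

lemma prob_space_unif: "prob_space (uniform_measure lborel {0<..<(1::real)})"
  by (intro prob_space_uniform_measure) auto

lemma prob_space_Mp: "prob_space (Mp p)"
  unfolding Mp_def
  by (intro prob_space_pair prob_space_measure_pmf prob_space_unif)

lemma prob_space_bf: "prob_space (bf_space p)"
  unfolding bf_space_Mp by (intro prob_space_PiM prob_space_Mp)

lemma sets_Mp: "sets (Mp p) = sets (count_space UNIV \<Otimes>\<^sub>M (borel :: real measure))"
  unfolding Mp_def
  by (intro sets_pair_measure_cong) (auto simp: sets_uniform_measure)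

lemma sets_PiM_Mp: "sets (PiM I (\<lambda>_. Mp p)) = sets (PiM I (\<lambda>_. count_space UNIV \<Otimes>\<^sub>M (borel :: real measure)))"
  by (intro sets_PiM_cong) (auto simp: sets_Mp)

lemma sets_PiM_Mp': "sets (PiM I (\<lambda>_. Mp p)) = sets (PiM I (\<lambda>_. Mp q))"
  by (simp add: sets_PiM_Mp)

lemma sets_prefix: "sets (prefix_space n) = sets (PiM {..<n} (\<lambda>_. Mp p))"
  by (simp add: sets_PiM_Mp prefix_space_def)

lemma fst_Mp_meas[measurable]: "fst \<in> Mp p \<rightarrow>\<^sub>M count_space UNIV"
  by (subst measurable_cong_sets[OF sets_Mp refl]) simp

definition rho :: "real \<Rightarrow> real \<Rightarrow> bool \<Rightarrow> real" where
  "rho q p b = (if b then q / p else (1 - q) / (1 - p))"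

lemma bern_density:
  assumes "0 < p" "p < 1" "0 \<le> q" "q \<le> 1"
  shows "measure_pmf (bernoulli_pmf q) = density (measure_pmf (bernoulli_pmf p)) (\<lambda>b. ennreal (rho q p b))"
proof -
  have "density (measure_pmf (bernoulli_pmf p)) (\<lambda>b. ennreal (rho q p b))
       = density (count_space UNIV) (\<lambda>b. ennreal (pmf (bernoulli_pmf p) b) * ennreal (rho q p b))"
    unfolding measure_pmf_eq_density[of "bernoulli_pmf p"]
    by (subst density_density_eq) auto
  also have "(\<lambda>b. ennreal (pmf (bernoulli_pmf p) b) * ennreal (rho q p b)) = (\<lambda>b. ennreal (pmf (bernoulli_pmf q) b))"
    using assms by (auto simp: rho_def ennreal_mult'[symmetric] intro!: ext)
  finally show ?thesis by (simp add: measure_pmf_eq_density)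
qed

lemma Mp_density:
  assumes "0 < p" "p < 1" "0 \<le> q" "q \<le> 1"
  shows "Mp q = density (Mp p) (\<lambda>x. ennreal (rho q p (fst x)))"
proof -
  interpret U: prob_space "uniform_measure lborel {0<..<(1::real)}" by (rule prob_space_unif)
  have "Mp q = density (measure_pmf (bernoulli_pmf p)) (\<lambda>b. ennreal (rho q p b)) \<Otimes>\<^sub>M
       density (uniform_measure lborel {0<..<(1::real)}) (\<lambda>_. 1)"
    unfolding Mp_def bern_density[OF assms] density_1 ..
  also have "\<dots> = density (Mp p) (\<lambda>(x,y). ennreal (rho q p x) * 1)"
    unfolding Mp_def
    by (rule pair_measure_density) (auto simp: density_1 intro: U.sigma_finite_measure_axioms)
  finally show ?thesis by (simp add: case_prod_beta')
qed


lemma rho_nonneg: "0 < p \<Longrightarrow> p < 1 \<Longrightarrow> 0 \<le> q \<Longrightarrow> q \<le> 1 \<Longrightarrow> 0 \<le> rho q p b"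
  by (auto simp: rho_def)

definition Lf :: "real \<Rightarrow> real \<Rightarrow> nat \<Rightarrow> (nat \<Rightarrow> bool \<times> real) \<Rightarrow> real" where
  "Lf q p n x = (\<Prod>i<n. rho q p (fst (x i)))"

lemma Lf_nonneg: "0 < p \<Longrightarrow> p < 1 \<Longrightarrow> 0 \<le> q \<Longrightarrow> q \<le> 1 \<Longrightarrow> 0 \<le> Lf q p n x"
  unfolding Lf_def by (intro prod_nonneg) (auto simp: rho_nonneg)

lemma Lf_restrict: "Lf q p n (restrict x {..<n}) = Lf q p n x"
  unfolding Lf_def by (intro prod.cong) auto

lemma PiM_density:
  assumes "0 < p" "p < 1" "0 \<le> q" "q \<le> 1"
  shows "density (PiM {..<n} (\<lambda>_. Mp p)) (\<lambda>x. ennreal (Lf q p n x)) = PiM {..<n} (\<lambda>_. Mp q)"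
proof -
  interpret Q: product_prob_space "\<lambda>_. Mp q" "{..<n}"
    by (simp add: product_prob_space_def product_sigma_finite_def prob_space_Mp
        prob_space_imp_sigma_finite product_prob_space_axioms_def)
  interpret P: product_prob_space "\<lambda>_. Mp p" "{..<n}"
    by (simp add: product_prob_space_def product_sigma_finite_def prob_space_Mp
        prob_space_imp_sigma_finite product_prob_space_axioms_def)
  show ?thesis
  proof (rule Q.PiM_eqI)
    show "sets (density (PiM {..<n} (\<lambda>_. Mp p)) (\<lambda>x. ennreal (Lf q p n x))) = sets (PiM {..<n} (\<lambda>_. Mp q))"
      by (simp add: sets_PiM_Mp)
    fix A assume A: "\<And>i. i \<in> {..<n} \<Longrightarrow> A i \<in> sets (Mp q)"
    then have A': "\<And>i. i \<in> {..<n} \<Longrightarrow> A i \<in> sets (Mp p)" by (simp add: sets_Mp)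
    have meas: "(\<lambda>x. ennreal (Lf q p n x)) \<in> borel_measurable (PiM {..<n} (\<lambda>_. Mp p))"
    proof -
      have "(\<lambda>x. rho q p (fst (x i))) \<in> borel_measurable (PiM {..<n} (\<lambda>_. Mp p))" if "i < n" for i
      proof -
        have "(\<lambda>x. fst (x i)) \<in> PiM {..<n} (\<lambda>_. Mp p) \<rightarrow>\<^sub>M count_space UNIV"
        proof (rule measurable_compose[of _ _ "Mp p"])
          show "(\<lambda>x. x i) \<in> PiM {..<n} (\<lambda>_. Mp p) \<rightarrow>\<^sub>M Mp p"
            using that by (intro measurable_component_singleton) simp
        qed (rule fst_Mp_meas)
        then show ?thesis by (rule measurable_compose) simp
      qed
      then show ?thesis unfolding Lf_def by (intro measurable_compose[OF _ measurable_ennreal] borel_measurable_prod) auto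
    qed
    have "emeasure (density (PiM {..<n} (\<lambda>_. Mp p)) (\<lambda>x. ennreal (Lf q p n x))) (PiE {..<n} A)
        = (\<integral>\<^sup>+ x. ennreal (Lf q p n x) * indicator (PiE {..<n} A) x \<partial>PiM {..<n} (\<lambda>_. Mp p))"
      using A' by (subst emeasure_density[OF meas]) (auto intro!: sets_PiM_I_finite)
    also have "\<dots> = (\<integral>\<^sup>+ x. (\<Prod>i\<in>{..<n}. ennreal (rho q p (fst (x i))) * indicator (A i) (x i)) \<partial>PiM {..<n} (\<lambda>_. Mp p))"
    proof (intro nn_integral_cong)
      fix x assume "x \<in> space (PiM {..<n} (\<lambda>_. Mp p))"
      then have ext: "x \<in> extensional {..<n}" by (simp add: space_PiM PiE_def)
      have "indicator (PiE {..<n} A) x = (\<Prod>i\<in>{..<n}. indicator (A i) (x i) :: ennreal)"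
        using ext by (auto simp: indicator_def PiE_def Pi_def prod_zero_iff)
      then show "ennreal (Lf q p n x) * indicator (PiE {..<n} A) x =
          (\<Prod>i\<in>{..<n}. ennreal (rho q p (fst (x i))) * indicator (A i) (x i))"
        using assms by (simp add: Lf_def prod_ennreal[symmetric] rho_nonneg prod.distrib)
    qed
    also have "\<dots> = (\<Prod>i\<in>{..<n}. \<integral>\<^sup>+ y. ennreal (rho q p (fst y)) * indicator (A i) y \<partial>Mp p)"
      using A' by (intro P.product_nn_integral_prod) (auto intro!: measurable_compose[OF fst_Mp_meas])
    also have "\<dots> = (\<Prod>i\<in>{..<n}. emeasure (Mp q) (A i))"
      using A' by (intro prod.cong refl) (simp add: Mp_density[OF assms] emeasure_density rho_def)
    finally show "emeasure (density (PiM {..<n} (\<lambda>_. Mp p)) (\<lambda>x. ennreal (Lf q p n x))) (PiE {..<n} A)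
        = (\<Prod>i\<in>{..<n}. emeasure (Mp q) (A i))" .
  qed simp
qed

lemma prob_space_PiM_Mp: "prob_space (PiM I (\<lambda>_. Mp p))"
  by (intro prob_space_PiM prob_space_Mp)

lemma product_prob_space_Mp: "product_prob_space (\<lambda>_. Mp p)"
  by (simp add: product_prob_space_def product_sigma_finite_def prob_space_Mp
        prob_space_imp_sigma_finite product_prob_space_axioms_def)

lemma restrict_meas: "(\<lambda>\<omega>. restrict \<omega> {..<n}) \<in> bf_space p \<rightarrow>\<^sub>M PiM {..<n} (\<lambda>_. Mp p)"
  unfolding bf_space_Mp by (rule measurable_restrict_subset) auto

lemma space_bf: "space (bf_space p) = space (bf_space q)"
  unfolding bf_space_Mp by (rule sets_eq_imp_space_eq) (rule sets_PiM_Mp')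

lemma CM:
  assumes "0 < p" "p < 1" "0 \<le> q" "q \<le> 1"
    and g: "g \<in> borel_measurable (PiM {..<n} (\<lambda>_. Mp p))"
  shows "(\<integral>\<^sup>+\<omega>. g (restrict \<omega> {..<n}) \<partial>bf_space q) =
         (\<integral>\<^sup>+\<omega>. g (restrict \<omega> {..<n}) * ennreal (Lf q p n \<omega>) \<partial>bf_space p)"
proof -
  interpret Q: product_prob_space "\<lambda>_. Mp q" UNIV by (rule product_prob_space_Mp)
  interpret P: product_prob_space "\<lambda>_. Mp p" UNIV by (rule product_prob_space_Mp)
  have gq: "g \<in> borel_measurable (PiM {..<n} (\<lambda>_. Mp q))"
    using g by (subst measurable_cong_sets[OF sets_PiM_Mp' refl]) 
  have Lm: "(\<lambda>x. ennreal (Lf q p n x)) \<in> borel_measurable (PiM {..<n} (\<lambda>_. Mp p))"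
  proof -
    have "(\<lambda>x. rho q p (fst (x i))) \<in> borel_measurable (PiM {..<n} (\<lambda>_. Mp p))" if "i < n" for i
    proof -
      have "(\<lambda>x. fst (x i)) \<in> PiM {..<n} (\<lambda>_. Mp p) \<rightarrow>\<^sub>M count_space UNIV"
      proof (rule measurable_compose[of _ _ "Mp p"])
        show "(\<lambda>x. x i) \<in> PiM {..<n} (\<lambda>_. Mp p) \<rightarrow>\<^sub>M Mp p"
          using that by (intro measurable_component_singleton) simp
      qed (rule fst_Mp_meas)
      then show ?thesis by (rule measurable_compose) simp
    qed
    then show ?thesis unfolding Lf_def by (intro measurable_compose[OF _ measurable_ennreal] borel_measurable_prod) auto
  qed
  have "(\<integral>\<^sup>+\<omega>. g (restrict \<omega> {..<n}) \<partial>bf_space q) =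
        (\<integral>\<^sup>+x. g x \<partial>distr (bf_space q) (PiM {..<n} (\<lambda>_. Mp q)) (\<lambda>\<omega>. restrict \<omega> {..<n}))"
    by (rule nn_integral_distr[symmetric, OF restrict_meas]) (simp add: gq)
  also have "distr (bf_space q) (PiM {..<n} (\<lambda>_. Mp q)) (\<lambda>\<omega>. restrict \<omega> {..<n}) = PiM {..<n} (\<lambda>_. Mp q)"
    unfolding bf_space_Mp by (rule Q.distr_PiM_restrict_finite) auto
  also have "\<dots> = density (PiM {..<n} (\<lambda>_. Mp p)) (\<lambda>x. ennreal (Lf q p n x))"
    by (rule PiM_density[symmetric, OF assms(1-4)])
  also have "(\<integral>\<^sup>+x. g x \<partial>\<dots>) = (\<integral>\<^sup>+x. ennreal (Lf q p n x) * g x \<partial>PiM {..<n} (\<lambda>_. Mp p))"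
    by (rule nn_integral_density[OF Lm g])
  also have "PiM {..<n} (\<lambda>_. Mp p) = distr (bf_space p) (PiM {..<n} (\<lambda>_. Mp p)) (\<lambda>\<omega>. restrict \<omega> {..<n})"
    unfolding bf_space_Mp by (rule P.distr_PiM_restrict_finite[symmetric]) auto
  also have "(\<integral>\<^sup>+x. ennreal (Lf q p n x) * g x \<partial>\<dots>) =
     (\<integral>\<^sup>+\<omega>. ennreal (Lf q p n (restrict \<omega> {..<n})) * g (restrict \<omega> {..<n}) \<partial>bf_space p)"
    by (rule nn_integral_distr[OF restrict_meas]) (use Lm g in measurable)
  finally show ?thesis by (simp only: Lf_restrict mult.commute)
qed

lemma Lf_meas: "(\<lambda>x. ennreal (Lf q p n x)) \<in> borel_measurable (PiM {..<n} (\<lambda>_. Mp p))"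
proof -
  have "(\<lambda>x. rho q p (fst (x i))) \<in> borel_measurable (PiM {..<n} (\<lambda>_. Mp p))" if "i < n" for i
  proof -
    have "(\<lambda>x. fst (x i)) \<in> PiM {..<n} (\<lambda>_. Mp p) \<rightarrow>\<^sub>M count_space UNIV"
    proof (rule measurable_compose[of _ _ "Mp p"])
      show "(\<lambda>x. x i) \<in> PiM {..<n} (\<lambda>_. Mp p) \<rightarrow>\<^sub>M Mp p"
        using that by (intro measurable_component_singleton) simp
    qed (rule fst_Mp_meas)
    then show ?thesis by (rule measurable_compose) simp
  qed
  then show ?thesis unfolding Lf_def by (intro measurable_compose[OF _ measurable_ennreal] borel_measurable_prod) auto
qed

lemma restrict_restrict_le: "(i::nat) \<le> n \<Longrightarrow> restrict (restrict x {..<n}) {..<i} = restrict x {..<i}"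
proof -
  assume "i \<le> n"
  then have "{..<n} \<inter> {..<i} = {..<i}" by (intro Int_absorb1) simp
  then show ?thesis by simp
qed

locale fac =
  fixes \<tau> \<gamma> :: "nat \<Rightarrow> (nat \<Rightarrow> bool \<times> real) \<Rightarrow> bool"
  assumes tau_meas: "\<And>i. \<tau> i \<in> prefix_space i \<rightarrow>\<^sub>M count_space UNIV"
  and gam_meas: "\<And>n. \<gamma> n \<in> prefix_space n \<rightarrow>\<^sub>M count_space UNIV"
begin

lemma tau_meas': "\<tau> i \<in> PiM {..<i} (\<lambda>_. Mp p) \<rightarrow>\<^sub>M count_space UNIV"
  using tau_meas[of i] by (subst measurable_cong_sets[OF sets_prefix[symmetric] refl])

lemma gam_meas': "\<gamma> i \<in> PiM {..<i} (\<lambda>_. Mp p) \<rightarrow>\<^sub>M count_space UNIV"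
  using gam_meas[of i] by (subst measurable_cong_sets[OF sets_prefix[symmetric] refl])

definition stopP :: "nat \<Rightarrow> (nat \<Rightarrow> bool \<times> real) \<Rightarrow> bool" where
  "stopP n x \<longleftrightarrow> 1 \<le> n \<and> \<tau> n x \<and> (\<forall>i\<in>{1..<n}. \<not> \<tau> i (restrict x {..<i}))"

lemma stop_time_eq: "stop_time \<tau> \<omega> = enat n \<longleftrightarrow> stopP n (restrict \<omega> {..<n})"
proof -
  have rr: "\<And>i. i \<le> n \<Longrightarrow> restrict (restrict \<omega> {..<n}) {..<i} = restrict \<omega> {..<i}"
    by (rule restrict_restrict_le)
  show ?thesis
  proof
    assume h: "stop_time \<tau> \<omega> = enat n"
    then have ex: "\<exists>i\<ge>1. \<tau> i (restrict \<omega> {..<i})"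
      by (auto simp: stop_time_def split: if_splits)
    then have n: "n = (LEAST i. i \<ge> 1 \<and> \<tau> i (restrict \<omega> {..<i}))"
      using h by (simp add: stop_time_def)
    have P: "n \<ge> 1 \<and> \<tau> n (restrict \<omega> {..<n})"
      unfolding n using ex by (rule LeastI_ex)
    have "\<not> \<tau> i (restrict \<omega> {..<i})" if "i \<in> {1..<n}" for i
      using not_less_Least[of i "\<lambda>i. i \<ge> 1 \<and> \<tau> i (restrict \<omega> {..<i})"] that n by auto
    then show "stopP n (restrict \<omega> {..<n})"
      using P by (auto simp: stopP_def rr simp del: restrict_restrict)
  next
    assume h: "stopP n (restrict \<omega> {..<n})"
    then have P: "n \<ge> 1" "\<tau> n (restrict \<omega> {..<n})" "\<And>i. i \<in> {1..<n} \<Longrightarrow> \<not> \<tau> i (restrict \<omega> {..<i})"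
      by (auto simp: stopP_def rr simp del: restrict_restrict)
    have "(LEAST i. i \<ge> 1 \<and> \<tau> i (restrict \<omega> {..<i})) = n"
      by (rule Least_equality) (use P in \<open>auto simp: not_less[symmetric]\<close>)
    then show "stop_time \<tau> \<omega> = enat n"
      using P by (auto simp: stop_time_def)
  qed
qed

lemma stopP_meas: "Measurable.pred (PiM {..<n} (\<lambda>_. Mp p)) (stopP n)"
proof -
  have "Measurable.pred (PiM {..<n} (\<lambda>_. Mp p)) (\<lambda>x. \<forall>i\<in>{1..<n}. \<not> \<tau> i (restrict x {..<i}))"
  proof (rule pred_intros_finite)
    fix i assume i: "i \<in> {1..<n}"
    have "(\<lambda>x. \<tau> i (restrict x {..<i})) \<in> PiM {..<n} (\<lambda>_. Mp p) \<rightarrow>\<^sub>M count_space UNIV"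
      by (rule measurable_compose[OF measurable_restrict_subset tau_meas']) (use i in auto)
    then show "Measurable.pred (PiM {..<n} (\<lambda>_. Mp p)) (\<lambda>x. \<not> \<tau> i (restrict x {..<i}))"
      by measurable
  qed simp
  moreover have "Measurable.pred (PiM {..<n} (\<lambda>_. Mp p)) (\<tau> n)" by (rule tau_meas')
  ultimately show ?thesis unfolding stopP_def by (intro pred_intros_conj1' pred_intros_logic(3))
qed

definition caseF :: "(nat \<Rightarrow> (nat \<Rightarrow> bool \<times> real) \<Rightarrow> ennreal) \<Rightarrow> (nat \<Rightarrow> bool \<times> real) \<Rightarrow> ennreal" where
  "caseF \<phi> \<omega> = (case stop_time \<tau> \<omega> of enat m \<Rightarrow> \<phi> m (restrict \<omega> {..<m}) | \<infinity> \<Rightarrow> 0)"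

definition gF :: "(nat \<Rightarrow> (nat \<Rightarrow> bool \<times> real) \<Rightarrow> ennreal) \<Rightarrow> nat \<Rightarrow> (nat \<Rightarrow> bool \<times> real) \<Rightarrow> ennreal" where
  "gF \<phi> m x = (if stopP m x then \<phi> m x else 0)"

lemma caseF_suminf: "caseF \<phi> \<omega> = (\<Sum>m. gF \<phi> m (restrict \<omega> {..<m}))"
proof (cases "stop_time \<tau> \<omega>")
  case (enat n)
  have "(\<Sum>m. gF \<phi> m (restrict \<omega> {..<m})) = (\<Sum>m\<in>{n}. gF \<phi> m (restrict \<omega> {..<m}))"
    by (rule suminf_finite) (use enat in \<open>auto simp: gF_def stop_time_eq[symmetric]\<close>)
  then show ?thesis using enat by (simp add: caseF_def gF_def stop_time_eq[symmetric])
next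
  case infinity
  have "gF \<phi> m (restrict \<omega> {..<m}) = 0" for m
    using infinity by (auto simp: gF_def stop_time_eq[symmetric])
  then show ?thesis using infinity by (simp add: caseF_def)
qed

lemma gF_meas:
  assumes "\<And>m. \<phi> m \<in> borel_measurable (PiM {..<m} (\<lambda>_. Mp p))"
  shows "(\<lambda>\<omega>. gF \<phi> m (restrict \<omega> {..<m})) \<in> borel_measurable (bf_space p)"
proof -
  have "gF \<phi> m \<in> borel_measurable (PiM {..<m} (\<lambda>_. Mp p))"
    unfolding gF_def by (intro measurable_If assms stopP_meas[unfolded pred_def]) simp
  then show ?thesis by (rule measurable_compose[OF restrict_meas])
qed

lemma nn_caseF:
  assumes "\<And>m. \<phi> m \<in> borel_measurable (PiM {..<m} (\<lambda>_. Mp p))"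
  shows "(\<integral>\<^sup>+\<omega>. caseF \<phi> \<omega> \<partial>bf_space p) = (\<Sum>m. \<integral>\<^sup>+\<omega>. gF \<phi> m (restrict \<omega> {..<m}) \<partial>bf_space p)"
  unfolding caseF_suminf by (rule nn_integral_suminf) (rule gF_meas[OF assms])

lemma caseF_meas:
  assumes "\<And>m. \<phi> m \<in> borel_measurable (PiM {..<m} (\<lambda>_. Mp p))"
  shows "caseF \<phi> \<in> borel_measurable (bf_space p)"
  unfolding caseF_suminf[abs_def] by (rule borel_measurable_suminf_order, rule gF_meas[OF assms])

lemma CM_case:
  assumes "0 < p" "p < 1" "0 \<le> q" "q \<le> 1"
    and meas: "\<And>m. \<phi> m \<in> borel_measurable (PiM {..<m} (\<lambda>_. Mp p))"
  shows "(\<integral>\<^sup>+\<omega>. caseF \<phi> \<omega> \<partial>bf_space q) =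
         (\<integral>\<^sup>+\<omega>. caseF (\<lambda>m x. \<phi> m x * ennreal (Lf q p m x)) \<omega> \<partial>bf_space p)"
proof -
  have measq: "\<phi> m \<in> borel_measurable (PiM {..<m} (\<lambda>_. Mp q))" for m
    using meas[of m] by (subst measurable_cong_sets[OF sets_PiM_Mp' refl])
  have meas2: "(\<lambda>x. \<phi> m x * ennreal (Lf q p m x)) \<in> borel_measurable (PiM {..<m} (\<lambda>_. Mp p))" for m
    using meas Lf_meas by measurable
  have gm: "gF \<phi> m \<in> borel_measurable (PiM {..<m} (\<lambda>_. Mp p))" for m
    unfolding gF_def by (intro measurable_If meas stopP_meas[unfolded pred_def]) simp
  have "(\<integral>\<^sup>+\<omega>. caseF \<phi> \<omega> \<partial>bf_space q) = (\<Sum>m. \<integral>\<^sup>+\<omega>. gF \<phi> m (restrict \<omega> {..<m}) \<partial>bf_space q)"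
    by (rule nn_caseF[OF measq])
  also have "\<dots> = (\<Sum>m. \<integral>\<^sup>+\<omega>. gF (\<lambda>m x. \<phi> m x * ennreal (Lf q p m x)) m (restrict \<omega> {..<m}) \<partial>bf_space p)"
  proof (intro suminf_cong)
    fix m
    have "(\<integral>\<^sup>+\<omega>. gF \<phi> m (restrict \<omega> {..<m}) \<partial>bf_space q) =
          (\<integral>\<^sup>+\<omega>. gF \<phi> m (restrict \<omega> {..<m}) * ennreal (Lf q p m \<omega>) \<partial>bf_space p)"
      by (rule CM[OF assms(1-4) gm])
    also have "\<dots> = (\<integral>\<^sup>+\<omega>. gF (\<lambda>m x. \<phi> m x * ennreal (Lf q p m x)) m (restrict \<omega> {..<m}) \<partial>bf_space p)"
      by (intro nn_integral_cong) (simp add: gF_def Lf_restrict)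
    finally show "(\<integral>\<^sup>+\<omega>. gF \<phi> m (restrict \<omega> {..<m}) \<partial>bf_space q) = \<dots>" .
  qed
  also have "\<dots> = (\<integral>\<^sup>+\<omega>. caseF (\<lambda>m x. \<phi> m x * ennreal (Lf q p m x)) \<omega> \<partial>bf_space p)"
    by (rule nn_caseF[symmetric, OF meas2])
  finally show ?thesis .
qed

end

lemma space_Mp: "space (Mp p) = UNIV"
  by (simp add: Mp_def space_pair_measure)

lemma space_bf_UNIV: "space (bf_space p) = UNIV"
  by (auto simp: bf_space_Mp space_PiM space_Mp PiE_def extensional_def)

lemma sets_bf: "sets (bf_space p) = sets (bf_space q)"
  by (simp add: bf_space_Mp sets_PiM_Mp')

context fac
begin

definition Nn :: "(nat \<Rightarrow> bool \<times> real) \<Rightarrow> nat" where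
  "Nn \<omega> = (case stop_time \<tau> \<omega> of enat n \<Rightarrow> n | \<infinity> \<Rightarrow> 0)"

definition G :: "real \<Rightarrow> real \<Rightarrow> (nat \<Rightarrow> bool \<times> real) \<Rightarrow> real" where
  "G q p \<omega> = Lf q p (Nn \<omega>) \<omega>"

lemma stop_eq_set_meas: "{\<omega>. stop_time \<tau> \<omega> = enat n} \<in> sets (bf_space p)"
proof -
  have "Measurable.pred (bf_space p) (\<lambda>\<omega>. stopP n (restrict \<omega> {..<n}))"
    by (rule measurable_compose[OF restrict_meas stopP_meas])
  then show ?thesis by (simp add: stop_time_eq pred_def space_bf_UNIV)
qed

lemma stop_meas: "stop_time \<tau> \<in> bf_space p \<rightarrow>\<^sub>M count_space UNIV"
proof (subst measurable_count_space_eq2_countable, intro conjI ballI)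
  fix a :: enat assume "a \<in> UNIV"
  show "stop_time \<tau> -` {a} \<inter> space (bf_space p) \<in> sets (bf_space p)"
  proof (cases a)
    case (enat n)
    then show ?thesis using stop_eq_set_meas[of n p] by (simp add: space_bf_UNIV vimage_def)
  next
    case infinity
    have "stop_time \<tau> -` {a} \<inter> space (bf_space p) = space (bf_space p) - (\<Union>n. {\<omega>. stop_time \<tau> \<omega> = enat n})"
      using infinity by (auto simp: space_bf_UNIV)
    also have "\<dots> \<in> sets (bf_space p)"
      using stop_eq_set_meas by (intro sets.Diff sets.countable_UN) auto
    finally show ?thesis .
  qed
qed auto

lemma Nn_meas: "Nn \<in> bf_space p \<rightarrow>\<^sub>M count_space UNIV"
  unfolding Nn_def[abs_def] by (rule measurable_compose[OF stop_meas]) simp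

lemma Lf_meas_bf: "(\<lambda>\<omega>. Lf q p n \<omega>) \<in> borel_measurable (bf_space r)"
proof -
  have "(\<lambda>x. rho q p (fst (x i))) \<in> borel_measurable (bf_space r)" for i
  proof -
    have "(\<lambda>x. fst (x i)) \<in> bf_space r \<rightarrow>\<^sub>M count_space UNIV"
    proof (rule measurable_compose[of _ _ "Mp r"])
      show "(\<lambda>x. x i) \<in> bf_space r \<rightarrow>\<^sub>M Mp r"
        unfolding bf_space_Mp by (intro measurable_component_singleton) simp
    qed (rule fst_Mp_meas)
    then show ?thesis by (rule measurable_compose) simp
  qed
  then show ?thesis unfolding Lf_def by (intro borel_measurable_prod) auto
qed

lemma G_meas: "G q p \<in> borel_measurable (bf_space r)"
  unfolding G_def[abs_def]
  by (rule measurable_compose_countable'[OF Lf_meas_bf Nn_meas]) auto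

lemma Nn_real_meas: "(\<lambda>\<omega>. real (Nn \<omega>)) \<in> borel_measurable (bf_space r)"
  by (rule measurable_compose[OF Nn_meas]) simp

end

lemma CS_real:
  fixes X Y :: "'a \<Rightarrow> real"
  assumes [measurable]: "X \<in> borel_measurable M" "Y \<in> borel_measurable M"
    and iX: "integrable M (\<lambda>x. X x ^ 2)" and iY: "integrable M (\<lambda>x. Y x ^ 2)" and iXY: "integrable M (\<lambda>x. X x * Y x)"
  shows "(\<integral>x. X x * Y x \<partial>M)\<^sup>2 \<le> (\<integral>x. X x ^ 2 \<partial>M) * (\<integral>x. Y x ^ 2 \<partial>M)"
proof -
  have iabs: "integrable M (\<lambda>x. \<bar>X x\<bar> * \<bar>Y x\<bar>)"
    using integrable_abs[OF iXY] by (simp add: abs_mult)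
  have "(\<integral>\<^sup>+x. ennreal \<bar>X x\<bar> * ennreal \<bar>Y x\<bar> \<partial>M)\<^sup>2 \<le>
        (\<integral>\<^sup>+x. ennreal \<bar>X x\<bar> ^ 2 \<partial>M) * (\<integral>\<^sup>+x. ennreal \<bar>Y x\<bar> ^ 2 \<partial>M)"
    by (rule Cauchy_Schwarz_nn_integral) auto
  also have "(\<integral>\<^sup>+x. ennreal \<bar>X x\<bar> ^ 2 \<partial>M) = ennreal (\<integral>x. X x ^ 2 \<partial>M)"
    by (subst nn_integral_eq_integral[OF iX, symmetric]) (auto simp: ennreal_power intro!: nn_integral_cong)
  also have "(\<integral>\<^sup>+x. ennreal \<bar>Y x\<bar> ^ 2 \<partial>M) = ennreal (\<integral>x. Y x ^ 2 \<partial>M)"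
    by (subst nn_integral_eq_integral[OF iY, symmetric]) (auto simp: ennreal_power intro!: nn_integral_cong)
  also have "(\<integral>\<^sup>+x. ennreal \<bar>X x\<bar> * ennreal \<bar>Y x\<bar> \<partial>M) = ennreal (\<integral>x. \<bar>X x\<bar> * \<bar>Y x\<bar> \<partial>M)"
    by (subst nn_integral_eq_integral[OF iabs, symmetric]) (auto simp: ennreal_mult[symmetric] intro!: nn_integral_cong)
  finally have "(\<integral>x. \<bar>X x\<bar> * \<bar>Y x\<bar> \<partial>M)\<^sup>2 \<le> (\<integral>x. X x ^ 2 \<partial>M) * (\<integral>x. Y x ^ 2 \<partial>M)"
    by (simp add: ennreal_power ennreal_mult[symmetric] integral_nonneg_AE)
  moreover have "\<bar>\<integral>x. X x * Y x \<partial>M\<bar>^2 \<le> (\<integral>x. \<bar>X x\<bar> * \<bar>Y x\<bar> \<partial>M)^2"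
    using integral_abs_bound[of M "\<lambda>x. X x * Y x"] by (intro power_mono) (simp_all add: abs_mult)
  ultimately show ?thesis by simp
qed

lemma pow_ineq: fixes c :: real assumes "1 \<le> c" shows "c ^ n \<le> 1 + (c - 1) * n * c ^ n"
proof (induction n)
  case (Suc n)
  have "c ^ Suc n = c * c ^ n" by simp
  also have "\<dots> \<le> c * (1 + (c - 1) * n * c ^ n)" using Suc assms by (intro mult_left_mono) auto
  also have "\<dots> = 1 + (c - 1) + (c - 1) * n * c ^ Suc n" by (simp add: algebra_simps)
  also have "\<dots> \<le> 1 + (c - 1) * Suc n * c ^ Suc n"
  proof -
    have "1 \<le> c ^ Suc n" using assms by (rule one_le_power)
    then have "(c - 1) * 1 \<le> (c - 1) * c ^ Suc n" using assms by (intro mult_left_mono) auto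
    then show ?thesis by (simp add: algebra_simps)
  qed
  finally show ?case .
qed simp

definition cc :: "real \<Rightarrow> real \<Rightarrow> real" where "cc q p = q^2 / p + (1 - q)^2 / (1 - p)"
definition qq :: "real \<Rightarrow> real \<Rightarrow> real" where "qq q p = q^2 / (p * cc q p)"

lemma cc_minus_1: "0 < p \<Longrightarrow> p < 1 \<Longrightarrow> cc q p - 1 = (q - p)^2 / (p * (1 - p))"
  by (simp add: cc_def field_simps) (simp add: power2_eq_square algebra_simps)

lemma cc_ge1: "0 < p \<Longrightarrow> p < 1 \<Longrightarrow> 1 \<le> cc q p"
  using cc_minus_1[of p q] by (smt (verit) divide_nonneg_pos mult_pos_pos zero_le_power2)

lemma rho_qq: assumes "0 < p" "p < 1"
  shows "cc q p * rho (qq q p) p b = (rho q p b)^2"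
proof -
  have c: "cc q p > 0" using cc_ge1[of p q] assms by simp
  have pc: "p * cc q p = q^2 + p * (1-q)^2/(1-p)" using assms by (simp add: cc_def field_simps)
  have "1 - qq q p = (p * cc q p - q^2)/(p * cc q p)" using c assms by (simp add: qq_def field_simps)
  also have "\<dots> = (p*(1-q)^2/(1-p)) / (p * cc q p)" by (simp add: pc)
  also have "\<dots> = (1-q)^2/((1-p)*cc q p)" using assms c by (simp add: field_simps)
  finally have e: "1 - qq q p = (1 - q)^2 / ((1 - p) * cc q p)" .
  show ?thesis
  proof (cases b)
    case True
    have "cc q p * rho (qq q p) p b = cc q p * (q^2/(p*cc q p)) / p" by (simp add: True rho_def qq_def)
    also have "\<dots> = q^2/p^2" using c assms by (simp add: field_simps power2_eq_square)
    also have "\<dots> = (rho q p b)^2" by (simp add: True rho_def power_divide)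
    finally show ?thesis .
  next
    case False
    have "cc q p * rho (qq q p) p b = cc q p * ((1-q)^2/((1-p)*cc q p)) / (1-p)" by (simp add: False rho_def e)
    also have "\<dots> = (1-q)^2/(1-p)/(1-p)" using c by (simp add: divide_simps)
    also have "\<dots> = (1-q)^2/(1-p)^2" by (simp add: power2_eq_square)
    also have "\<dots> = (rho q p b)^2" by (simp add: False rho_def power_divide)
    finally show ?thesis .
  qed
qed

lemma Lf_qq: assumes "0 < p" "p < 1"
  shows "cc q p ^ n * Lf (qq q p) p n \<omega> = (Lf q p n \<omega>)^2"
proof -
  have "cc q p ^ n * Lf (qq q p) p n \<omega> = (\<Prod>i<n. cc q p * rho (qq q p) p (fst (\<omega> i)))"
    by (simp add: Lf_def prod.distrib)
  also have "\<dots> = (\<Prod>i<n. (rho q p (fst (\<omega> i)))^2)" using rho_qq[OF assms] by simp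
  also have "\<dots> = (Lf q p n \<omega>)^2" by (simp add: Lf_def prod_power_distrib)
  finally show ?thesis .
qed

lemma qq_range: assumes "0 < p" "p < 1" shows "0 \<le> qq q p" "qq q p \<le> 1"
proof -
  have c: "cc q p > 0" using cc_ge1[of p q] assms by simp
  show "0 \<le> qq q p" using assms c by (simp add: qq_def)
  have "q^2 / p \<le> cc q p" using assms by (simp add: cc_def zero_le_divide_iff)
  then show "qq q p \<le> 1" using assms c by (simp add: qq_def field_simps)
qed

context fac
begin

lemma key:
  assumes "0 < p" "p < 1" "0 \<le> q" "q \<le> 1"
    and fin: "AE \<omega> in bf_space p. stop_time \<tau> \<omega> \<noteq> \<infinity>"
    and meas: "\<And>m. \<phi> m \<in> borel_measurable (PiM {..<m} (\<lambda>_. Mp p))"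
  shows "(\<integral>\<^sup>+\<omega>. caseF \<phi> \<omega> \<partial>bf_space q) =
         (\<integral>\<^sup>+\<omega>. \<phi> (Nn \<omega>) (restrict \<omega> {..<Nn \<omega>}) * ennreal (G q p \<omega>) \<partial>bf_space p)"
  unfolding CM_case[OF assms(1-4) meas]
  by (intro nn_integral_cong_AE, use fin in eventually_elim)
     (auto simp: caseF_def G_def Nn_def Lf_restrict)

lemma caseF_fin:
  assumes fin: "AE \<omega> in bf_space p. stop_time \<tau> \<omega> \<noteq> \<infinity>"
  shows "(\<integral>\<^sup>+\<omega>. caseF \<phi> \<omega> \<partial>bf_space p) = (\<integral>\<^sup>+\<omega>. \<phi> (Nn \<omega>) (restrict \<omega> {..<Nn \<omega>}) \<partial>bf_space p)"
  by (intro nn_integral_cong_AE, use fin in eventually_elim) (auto simp: caseF_def Nn_def)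

end

lemma Lf_pp: "0 < p \<Longrightarrow> p < 1 \<Longrightarrow> Lf p p n \<omega> = 1"
proof -
  assume "0 < p" "p < 1"
  then have "\<And>b. rho p p b = 1" by (simp add: rho_def)
  then show ?thesis by (simp add: Lf_def)
qed

locale fac2 = fac +
  fixes S :: "real set" and f :: "real \<Rightarrow> real"
  assumes Ssub: "S \<subseteq> {0<..<1}"
  and fin: "\<And>p. p \<in> S \<Longrightarrow> AE \<omega> in bf_space p. stop_time \<tau> \<omega> \<noteq> \<infinity>"
  and fval: "\<And>p. p \<in> S \<Longrightarrow> measure (bf_space p)
         {\<omega> \<in> space (bf_space p). \<exists>n. stop_time \<tau> \<omega> = enat n \<and> \<gamma> n (restrict \<omega> {..<n})} = f p"
begin

lemma S01: "p \<in> S \<Longrightarrow> 0 < p" "p \<in> S \<Longrightarrow> p < 1"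
  using Ssub by auto

definition realA :: "(nat \<Rightarrow> bool \<times> real) \<Rightarrow> real" where
  "realA \<omega> = (if \<gamma> (Nn \<omega>) (restrict \<omega> {..<Nn \<omega>}) then 1 else 0)"

definition phiA :: "nat \<Rightarrow> (nat \<Rightarrow> bool \<times> real) \<Rightarrow> ennreal" where
  "phiA m x = ennreal (if \<gamma> m x then 1 else 0)"

lemma phiA_meas: "phiA m \<in> borel_measurable (PiM {..<m} (\<lambda>_. Mp p))"
  unfolding phiA_def[abs_def] using gam_meas'[of m p] by measurable

lemma realA_meas: "realA \<in> borel_measurable (bf_space r)"
proof -
  have "(\<lambda>\<omega>. if \<gamma> i (restrict \<omega> {..<i}) then 1 else (0::real)) \<in> borel_measurable (bf_space r)" for i
  proof -
    have "Measurable.pred (bf_space r) (\<lambda>\<omega>. \<gamma> i (restrict \<omega> {..<i}))"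
      by (rule measurable_compose[OF restrict_meas gam_meas'])
    then show ?thesis by measurable
  qed
  then show ?thesis unfolding realA_def[abs_def]
    by (rule measurable_compose_countable'[OF _ Nn_meas]) auto
qed

lemma f_nn: assumes "r \<in> S" shows "ennreal (f r) = (\<integral>\<^sup>+\<omega>. caseF phiA \<omega> \<partial>bf_space r)"
proof -
  interpret prob_space "bf_space r" by (rule prob_space_bf)
  define A where "A = {\<omega> \<in> space (bf_space r). \<exists>n. stop_time \<tau> \<omega> = enat n \<and> \<gamma> n (restrict \<omega> {..<n})}"
  have ind: "caseF phiA \<omega> = indicator A \<omega>" for \<omega>
    by (cases "stop_time \<tau> \<omega>") (auto simp: caseF_def phiA_def A_def space_bf_UNIV)
  have "caseF phiA \<in> borel_measurable (bf_space r)"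
    by (rule caseF_meas) (rule phiA_meas)
  then have "(indicator A :: _ \<Rightarrow> ennreal) \<in> borel_measurable (bf_space r)"
  proof -
    have "indicator A = caseF phiA" by (rule ext) (simp add: ind)
    with \<open>caseF phiA \<in> borel_measurable (bf_space r)\<close> show ?thesis by simp
  qed
  then have "A \<inter> space (bf_space r) \<in> sets (bf_space r)"
    by (simp only: borel_measurable_indicator_iff)
  moreover have "A \<inter> space (bf_space r) = A" by (auto simp: A_def)
  ultimately have Am: "A \<in> sets (bf_space r)" by simp
  have "(\<integral>\<^sup>+\<omega>. caseF phiA \<omega> \<partial>bf_space r) = emeasure (bf_space r) A"
    using Am by (simp add: ind)
  also have "\<dots> = ennreal (f r)"
    using fval[OF assms] by (simp add: emeasure_eq_measure A_def)
  finally show ?thesis by simp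
qed

lemma fq: assumes "p \<in> S" "q \<in> S"
  shows "ennreal (f q) = (\<integral>\<^sup>+\<omega>. ennreal (realA \<omega>) * ennreal (G q p \<omega>) \<partial>bf_space p)"
  unfolding f_nn[OF assms(2)]
  using S01[OF assms(1)] S01[OF assms(2)]
  by (subst key[OF _ _ _ _ fin[OF assms(1)] phiA_meas]) (auto simp: phiA_def realA_def)

lemma one_G: assumes "p \<in> S" "q \<in> S"
  shows "(\<integral>\<^sup>+\<omega>. ennreal (G q p \<omega>) \<partial>bf_space p) = 1"
proof -
  interpret Q: prob_space "bf_space q" by (rule prob_space_bf)
  have "(\<integral>\<^sup>+\<omega>. caseF (\<lambda>_ _. 1) \<omega> \<partial>bf_space q) = (\<integral>\<^sup>+\<omega>. 1 \<partial>bf_space q)"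
    by (subst caseF_fin[OF fin[OF assms(2)]]) simp
  also have "\<dots> = 1" by (simp add: Q.emeasure_space_1)
  finally have "(\<integral>\<^sup>+\<omega>. caseF (\<lambda>_ _. 1) \<omega> \<partial>bf_space q) = 1" .
  moreover have "(\<integral>\<^sup>+\<omega>. caseF (\<lambda>_ _. 1) \<omega> \<partial>bf_space q) = (\<integral>\<^sup>+\<omega>. 1 * ennreal (G q p \<omega>) \<partial>bf_space p)"
    using S01[OF assms(1)] S01[OF assms(2)]
    by (intro key[OF _ _ _ _ fin[OF assms(1)]]) auto
  ultimately show ?thesis by simp
qed

lemma Nn_fun_meas: "(\<lambda>\<omega>. h (Nn \<omega>) :: 'b::topological_space) \<in> borel_measurable (bf_space r)"
  by (rule measurable_compose[OF Nn_meas]) simp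

lemma G2: assumes "p \<in> S" "q \<in> S" "qq q p \<in> S"
  shows "(\<integral>\<^sup>+\<omega>. ennreal ((G q p \<omega>)^2) \<partial>bf_space p) \<le>
     1 + ennreal (cc q p - 1) * (\<integral>\<^sup>+\<omega>. ennreal (real (Nn \<omega>) * (G q p \<omega>)^2) \<partial>bf_space p)"
proof -
  interpret Q: prob_space "bf_space (qq q p)" by (rule prob_space_bf)
  note p01 = S01[OF assms(1)] and q01 = S01[OF assms(2)] and qq01 = S01[OF assms(3)]
  define c where "c = cc q p"
  have c1: "1 \<le> c" unfolding c_def using p01 by (rule cc_ge1)
  have a: "(\<integral>\<^sup>+\<omega>. ennreal (c ^ Nn \<omega>) \<partial>bf_space (qq q p)) = (\<integral>\<^sup>+\<omega>. ennreal ((G q p \<omega>)^2) \<partial>bf_space p)"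
  proof -
    have "(\<integral>\<^sup>+\<omega>. ennreal (c ^ Nn \<omega>) \<partial>bf_space (qq q p)) = (\<integral>\<^sup>+\<omega>. caseF (\<lambda>m x. ennreal (c ^ m)) \<omega> \<partial>bf_space (qq q p))"
      by (subst caseF_fin[OF fin[OF assms(3)]]) simp
    also have "\<dots> = (\<integral>\<^sup>+\<omega>. ennreal (c ^ Nn \<omega>) * ennreal (G (qq q p) p \<omega>) \<partial>bf_space p)"
      using p01 qq01 by (intro key[OF _ _ _ _ fin[OF assms(1)]]) auto
    also have "\<dots> = (\<integral>\<^sup>+\<omega>. ennreal ((G q p \<omega>)^2) \<partial>bf_space p)"
      using p01 c1 by (intro nn_integral_cong) (simp add: ennreal_mult'[symmetric] G_def Lf_qq c_def)
    finally show ?thesis .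
  qed
  have b: "(\<integral>\<^sup>+\<omega>. ennreal (real (Nn \<omega>) * c ^ Nn \<omega>) \<partial>bf_space (qq q p)) = (\<integral>\<^sup>+\<omega>. ennreal (real (Nn \<omega>) * (G q p \<omega>)^2) \<partial>bf_space p)"
  proof -
    have "(\<integral>\<^sup>+\<omega>. ennreal (real (Nn \<omega>) * c ^ Nn \<omega>) \<partial>bf_space (qq q p)) = (\<integral>\<^sup>+\<omega>. caseF (\<lambda>m x. ennreal (real m * c ^ m)) \<omega> \<partial>bf_space (qq q p))"
      by (subst caseF_fin[OF fin[OF assms(3)]]) simp
    also have "\<dots> = (\<integral>\<^sup>+\<omega>. ennreal (real (Nn \<omega>) * c ^ Nn \<omega>) * ennreal (G (qq q p) p \<omega>) \<partial>bf_space p)"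
      using p01 qq01 by (intro key[OF _ _ _ _ fin[OF assms(1)]]) auto
    also have "\<dots> = (\<integral>\<^sup>+\<omega>. ennreal (real (Nn \<omega>) * (G q p \<omega>)^2) \<partial>bf_space p)"
      using p01 c1 by (intro nn_integral_cong) (simp add: ennreal_mult'[symmetric] G_def Lf_qq[symmetric] c_def mult.assoc)
    finally show ?thesis .
  qed
  have "(\<integral>\<^sup>+\<omega>. ennreal (c ^ Nn \<omega>) \<partial>bf_space (qq q p)) \<le>
        (\<integral>\<^sup>+\<omega>. 1 + ennreal (c - 1) * ennreal (real (Nn \<omega>) * c ^ Nn \<omega>) \<partial>bf_space (qq q p))"
  proof (intro nn_integral_mono)
    fix \<omega>
    have "c ^ Nn \<omega> \<le> 1 + (c - 1) * (real (Nn \<omega>) * c ^ Nn \<omega>)"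
      using pow_ineq[OF c1, of "Nn \<omega>"] by (simp add: mult.assoc)
    then have "ennreal (c ^ Nn \<omega>) \<le> ennreal (1 + (c - 1) * (real (Nn \<omega>) * c ^ Nn \<omega>))"
      by (rule ennreal_leI)
    also have "\<dots> = 1 + ennreal ((c - 1) * (real (Nn \<omega>) * c ^ Nn \<omega>))"
      using c1 by (subst ennreal_plus) auto
    also have "\<dots> = 1 + ennreal (c - 1) * ennreal (real (Nn \<omega>) * c ^ Nn \<omega>)"
      using c1 by (subst ennreal_mult) auto
    finally show "ennreal (c ^ Nn \<omega>) \<le> 1 + ennreal (c - 1) * ennreal (real (Nn \<omega>) * c ^ Nn \<omega>)" .
  qed
  also have "\<dots> = 1 + ennreal (c - 1) * (\<integral>\<^sup>+\<omega>. ennreal (real (Nn \<omega>) * c ^ Nn \<omega>) \<partial>bf_space (qq q p))"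
  proof -
    have m: "(\<lambda>\<omega>. ennreal (real (Nn \<omega>) * c ^ Nn \<omega>)) \<in> borel_measurable (bf_space (qq q p))"
      by (rule Nn_fun_meas[where h = "\<lambda>n. ennreal (real n * c^n)"])
    show ?thesis using m by (subst nn_integral_add) (auto simp: Q.emeasure_space_1 nn_integral_cmult)
  qed
  finally show ?thesis using a b unfolding c_def by simp
qed

end

context fac2
begin

lemma f_range: assumes "p \<in> S" shows "0 \<le> f p" "f p \<le> 1"
proof -
  interpret P: prob_space "bf_space p" by (rule prob_space_bf)
  show "0 \<le> f p" unfolding fval[OF assms, symmetric] by (rule measure_nonneg)
  show "f p \<le> 1" unfolding fval[OF assms, symmetric] by (rule P.prob_le_1)
qed

lemma realA_01: "realA \<omega> = 0 \<or> realA \<omega> = 1"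
  by (simp add: realA_def)

lemma main_ineq:
  assumes p: "p \<in> S" and q: "q \<in> S" and qq: "qq q p \<in> S"
    and finN: "(\<integral>\<^sup>+\<omega>. ennreal (real (Nn \<omega>) * (G q p \<omega>)^2) \<partial>bf_space p) < \<infinity>"
  shows "(f q - f p)^2 \<le> f p * (1 - f p) * (cc q p - 1) * (\<integral>\<omega>. real (Nn \<omega>) * (G q p \<omega>)^2 \<partial>bf_space p)"
proof -
  interpret P: prob_space "bf_space p" by (rule prob_space_bf)
  note p01 = S01[OF p] and q01 = S01[OF q]
  define c where "c = cc q p"
  have c1: "1 \<le> c" using p01 by (simp add: c_def cc_ge1)
  have Gnn: "0 \<le> G q p \<omega>" for \<omega> using p01 q01 by (simp add: G_def Lf_nonneg)
  have Gm[measurable]: "G q p \<in> borel_measurable (bf_space p)" by (rule G_meas)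
  have Am[measurable]: "realA \<in> borel_measurable (bf_space p)" by (rule realA_meas)
  have Nm[measurable]: "(\<lambda>\<omega>. real (Nn \<omega>)) \<in> borel_measurable (bf_space p)" by (rule Nn_real_meas)
  have iG: "integrable (bf_space p) (G q p)"
    using one_G[OF p q] by (intro integrableI_nonneg Gm) (auto simp: Gnn)
  have intG: "(\<integral>\<omega>. G q p \<omega> \<partial>bf_space p) = 1"
  proof -
    have "ennreal (\<integral>\<omega>. G q p \<omega> \<partial>bf_space p) = 1"
      using nn_integral_eq_integral[OF iG] one_G[OF p q] Gnn by simp
    then show ?thesis by simp
  qed
  define I where "I = (\<integral>\<omega>. real (Nn \<omega>) * (G q p \<omega>)^2 \<partial>bf_space p)"
  have iNG: "integrable (bf_space p) (\<lambda>\<omega>. real (Nn \<omega>) * (G q p \<omega>)^2)"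
    using finN by (intro integrableI_nonneg) auto
  have I0: "0 \<le> I" unfolding I_def by (intro integral_nonneg_AE) auto
  have nnNG: "(\<integral>\<^sup>+ \<omega>. ennreal (real (Nn \<omega>) * (G q p \<omega>)^2) \<partial>bf_space p) = ennreal I"
    unfolding I_def by (rule nn_integral_eq_integral[OF iNG]) auto
  have G2le: "(\<integral>\<^sup>+\<omega>. ennreal ((G q p \<omega>)^2) \<partial>bf_space p) \<le> ennreal (1 + (c - 1) * I)"
  proof -
    have "1 + ennreal (c - 1) * ennreal I = ennreal (1 + (c - 1) * I)"
      using c1 I0 by (subst ennreal_plus) (auto simp: ennreal_mult[symmetric])
    then show ?thesis using G2[OF p q qq] nnNG by (simp add: c_def)
  qed
  have iG2: "integrable (bf_space p) (\<lambda>\<omega>. (G q p \<omega>)^2)"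
    using le_less_trans[OF G2le ennreal_less_top] by (intro integrableI_nonneg) auto
  have intG2: "(\<integral>\<omega>. (G q p \<omega>)^2 \<partial>bf_space p) \<le> 1 + (c - 1) * I"
  proof -
    have "ennreal (\<integral>\<omega>. (G q p \<omega>)^2 \<partial>bf_space p) \<le> ennreal (1 + (c - 1) * I)"
      using G2le nn_integral_eq_integral[OF iG2] by simp
    then show ?thesis using c1 I0 by (subst (asm) ennreal_le_iff) auto
  qed
  have iA: "integrable (bf_space p) realA"
    by (rule P.integrable_const_bound[where B=1]) (auto simp: realA_def)
  have iAG: "integrable (bf_space p) (\<lambda>\<omega>. realA \<omega> * G q p \<omega>)"
  proof (rule Bochner_Integration.integrable_bound[OF iG])
    show "(\<lambda>\<omega>. realA \<omega> * G q p \<omega>) \<in> borel_measurable (bf_space p)" by measurable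
    show "AE \<omega> in bf_space p. norm (realA \<omega> * G q p \<omega>) \<le> norm (G q p \<omega>)"
    proof (rule AE_I2)
      fix \<omega> show "norm (realA \<omega> * G q p \<omega>) \<le> norm (G q p \<omega>)"
        using realA_01[of \<omega>] by auto
    qed
  qed
  have intAG: "(\<integral>\<omega>. realA \<omega> * G q p \<omega> \<partial>bf_space p) = f q"
  proof -
    have "ennreal (f q) = (\<integral>\<^sup>+\<omega>. ennreal (realA \<omega> * G q p \<omega>) \<partial>bf_space p)"
      unfolding fq[OF p q] by (intro nn_integral_cong) (simp add: realA_def)
    also have "\<dots> = ennreal (\<integral>\<omega>. realA \<omega> * G q p \<omega> \<partial>bf_space p)"
      by (rule nn_integral_eq_integral[OF iAG]) (auto simp: realA_def Gnn)
    finally show ?thesis using f_range[OF q]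
      by (subst (asm) ennreal_inj) (auto intro!: integral_nonneg_AE simp: realA_def Gnn)
  qed
  have intA: "(\<integral>\<omega>. realA \<omega> \<partial>bf_space p) = f p"
  proof -
    have "ennreal (f p) = (\<integral>\<^sup>+\<omega>. ennreal (realA \<omega>) \<partial>bf_space p)"
      unfolding fq[OF p p] using p01 by (intro nn_integral_cong) (simp add: G_def Lf_pp)
    also have "\<dots> = ennreal (\<integral>\<omega>. realA \<omega> \<partial>bf_space p)"
      by (rule nn_integral_eq_integral[OF iA]) (auto simp: realA_def)
    finally have e: "ennreal (f p) = ennreal (\<integral>\<omega>. realA \<omega> \<partial>bf_space p)" .
    have "0 \<le> (\<integral>\<omega>. realA \<omega> \<partial>bf_space p)"
      by (intro integral_nonneg_AE) (simp add: realA_def)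
    then show ?thesis using f_range[OF p] e by (subst (asm) ennreal_inj) auto
  qed
  define X where "X \<omega> = realA \<omega> - f p" for \<omega>
  define Y where "Y \<omega> = G q p \<omega> - 1" for \<omega>
  have XYe: "(\<lambda>\<omega>. X \<omega> * Y \<omega>) = (\<lambda>\<omega>. (realA \<omega> * G q p \<omega> - realA \<omega>) - (f p * G q p \<omega> - f p))"
    by (auto simp: X_def Y_def algebra_simps)
  have X2e: "(\<lambda>\<omega>. (X \<omega>)^2) = (\<lambda>\<omega>. (1 - 2 * f p) * realA \<omega> + (f p)^2)"
  proof
    fix \<omega> show "(X \<omega>)^2 = (1 - 2 * f p) * realA \<omega> + (f p)^2"
      using realA_01[of \<omega>] by (auto simp: X_def power2_eq_square algebra_simps)
  qed
  have Y2e: "(\<lambda>\<omega>. (Y \<omega>)^2) = (\<lambda>\<omega>. ((G q p \<omega>)^2 - 2 * G q p \<omega>) + 1)"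
    by (auto simp: Y_def power2_eq_square algebra_simps)
  have iC: "\<And>a::real. integrable (bf_space p) (\<lambda>_. a)" by (rule P.integrable_const)
  have iGc: "integrable (bf_space p) (\<lambda>\<omega>. f p * G q p \<omega>)"
    by (rule Bochner_Integration.integrable_mult_right[OF iG])
  have i1: "integrable (bf_space p) (\<lambda>\<omega>. realA \<omega> * G q p \<omega> - realA \<omega>)"
    by (rule Bochner_Integration.integrable_diff[OF iAG iA])
  have i2: "integrable (bf_space p) (\<lambda>\<omega>. f p * G q p \<omega> - f p)"
    by (rule Bochner_Integration.integrable_diff[OF iGc iC])
  have iXY: "integrable (bf_space p) (\<lambda>\<omega>. X \<omega> * Y \<omega>)"
    unfolding XYe by (rule Bochner_Integration.integrable_diff[OF i1 i2])
  have iAc: "integrable (bf_space p) (\<lambda>\<omega>. (1 - 2 * f p) * realA \<omega>)"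
    by (rule Bochner_Integration.integrable_mult_right[OF iA])
  have iX2: "integrable (bf_space p) (\<lambda>\<omega>. (X \<omega>)^2)"
    unfolding X2e by (rule Bochner_Integration.integrable_add[OF iAc iC])
  have iG2c: "integrable (bf_space p) (\<lambda>\<omega>. 2 * G q p \<omega>)"
    by (rule Bochner_Integration.integrable_mult_right[OF iG])
  have i3: "integrable (bf_space p) (\<lambda>\<omega>. (G q p \<omega>)^2 - 2 * G q p \<omega>)"
    by (rule Bochner_Integration.integrable_diff[OF iG2 iG2c])
  have iY2: "integrable (bf_space p) (\<lambda>\<omega>. (Y \<omega>)^2)"
    unfolding Y2e by (rule Bochner_Integration.integrable_add[OF i3 iC])
  have intC: "\<And>a::real. (\<integral>\<omega>. a \<partial>bf_space p) = a" by (simp add: P.prob_space)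
  have intXY: "(\<integral>\<omega>. X \<omega> * Y \<omega> \<partial>bf_space p) = f q - f p"
  proof -
    have "(\<integral>\<omega>. X \<omega> * Y \<omega> \<partial>bf_space p) =
      (\<integral>\<omega>. realA \<omega> * G q p \<omega> - realA \<omega> \<partial>bf_space p) - (\<integral>\<omega>. f p * G q p \<omega> - f p \<partial>bf_space p)"
      unfolding XYe by (rule Bochner_Integration.integral_diff[OF i1 i2])
    also have "(\<integral>\<omega>. realA \<omega> * G q p \<omega> - realA \<omega> \<partial>bf_space p) = f q - f p"
      using Bochner_Integration.integral_diff[OF iAG iA] intAG intA by simp
    also have "(\<integral>\<omega>. f p * G q p \<omega> - f p \<partial>bf_space p) = f p * 1 - f p"
      using Bochner_Integration.integral_diff[OF iGc iC] intG intC by simp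
    finally show ?thesis by simp
  qed
  have intX2: "(\<integral>\<omega>. (X \<omega>)^2 \<partial>bf_space p) = f p * (1 - f p)"
  proof -
    have "(\<integral>\<omega>. (X \<omega>)^2 \<partial>bf_space p) = (\<integral>\<omega>. (1 - 2 * f p) * realA \<omega> \<partial>bf_space p) + (\<integral>\<omega>. (f p)^2 \<partial>bf_space p)"
      unfolding X2e by (rule Bochner_Integration.integral_add[OF iAc iC])
    also have "\<dots> = (1 - 2 * f p) * f p + (f p)^2" using intA intC by simp
    finally show ?thesis by (simp add: power2_eq_square algebra_simps)
  qed
  have intY2: "(\<integral>\<omega>. (Y \<omega>)^2 \<partial>bf_space p) = (\<integral>\<omega>. (G q p \<omega>)^2 \<partial>bf_space p) - 1"
  proof -
    have "(\<integral>\<omega>. (Y \<omega>)^2 \<partial>bf_space p) = (\<integral>\<omega>. (G q p \<omega>)^2 - 2 * G q p \<omega> \<partial>bf_space p) + (\<integral>\<omega>. 1 \<partial>bf_space p)"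
      unfolding Y2e by (rule Bochner_Integration.integral_add[OF i3 iC])
    also have "(\<integral>\<omega>. (G q p \<omega>)^2 - 2 * G q p \<omega> \<partial>bf_space p) = (\<integral>\<omega>. (G q p \<omega>)^2 \<partial>bf_space p) - 2"
      using Bochner_Integration.integral_diff[OF iG2 iG2c] intG by simp
    finally show ?thesis using P.prob_space by simp
  qed
  have Xm: "X \<in> borel_measurable (bf_space p)" unfolding X_def[abs_def] by measurable
  have Ym: "Y \<in> borel_measurable (bf_space p)" unfolding Y_def[abs_def] by measurable
  have "(f q - f p)^2 \<le> (\<integral>\<omega>. (X \<omega>)^2 \<partial>bf_space p) * (\<integral>\<omega>. (Y \<omega>)^2 \<partial>bf_space p)"
    using CS_real[OF Xm Ym iX2 iY2 iXY] intXY by simp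
  also have "\<dots> \<le> f p * (1 - f p) * ((c - 1) * I)"
    unfolding intX2 intY2 using f_range[OF p] intG2
    by (intro mult_left_mono) auto
  finally show ?thesis by (simp add: c_def I_def mult.assoc)
qed

end

lemma summable_n_pow: fixes x :: real assumes "0 \<le> x" "x < 1" shows "summable (\<lambda>n. real n * x^n)"
proof -
  have "summable (\<lambda>n. diffs (\<lambda>_. 1::real) n * x^n)"
    by (rule termdiff_converges[where K=1]) (use assms in \<open>auto intro: summable_geometric\<close>)
  then have s: "summable (\<lambda>n. real (Suc n) * x^n)" by (simp add: diffs_def)
  show ?thesis
    by (rule summable_comparison_test'[OF s, of 0]) (use assms in \<open>auto intro!: mult_right_mono\<close>)
qed

context fac2
begin

lemma stop_gt_meas: "{\<omega> \<in> space (bf_space p). enat k < stop_time \<tau> \<omega>} \<in> sets (bf_space p)"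
proof -
  have "Measurable.pred (bf_space p) (\<lambda>\<omega>. enat k < stop_time \<tau> \<omega>)"
    by (rule measurable_compose[OF stop_meas]) simp
  then show ?thesis by (simp add: pred_def)
qed

lemma fast_bound:
  assumes fast: "\<forall>n::nat. measure (bf_space p) {\<omega> \<in> space (bf_space p). stop_time \<tau> \<omega> > enat n} \<le> A * \<beta>^n"
    and A: "A > 0" and \<beta>: "\<beta> < 1"
  obtains K b where "0 < b" "b < 1" "0 \<le> K" "\<And>m. measure (bf_space p) {\<omega>. stop_time \<tau> \<omega> = enat m} \<le> K * b^m"
proof -
  interpret P: prob_space "bf_space p" by (rule prob_space_bf)
  have "0 \<le> A * \<beta>" using fast[rule_format, of 1] measure_nonneg[of "bf_space p"] by (smt (verit) power_one_right)
  then have b0: "0 \<le> \<beta>" using A by (simp add: zero_le_mult_iff)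
  define b where "b = max \<beta> (1/2)"
  have b: "0 < b" "b < 1" "\<beta> \<le> b" using \<beta> by (auto simp: b_def)
  define K where "K = A / b"
  have K: "0 \<le> K" using A b by (simp add: K_def)
  have "measure (bf_space p) {\<omega>. stop_time \<tau> \<omega> = enat m} \<le> K * b^m" for m
  proof (cases m)
    case 0
    have "{\<omega>. stop_time \<tau> \<omega> = enat m} = {}" using 0 by (auto simp: stop_time_eq stopP_def)
    then show ?thesis using K b by simp
  next
    case (Suc k)
    have "measure (bf_space p) {\<omega>. stop_time \<tau> \<omega> = enat m} \<le> measure (bf_space p) {\<omega> \<in> space (bf_space p). enat k < stop_time \<tau> \<omega>}"
      by (rule P.finite_measure_mono[OF _ stop_gt_meas]) (auto simp: Suc space_bf_UNIV)
    also have "\<dots> \<le> A * \<beta>^k" using fast by simp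
    also have "\<dots> \<le> A * b^k" using A b b0 by (intro mult_left_mono power_mono) auto
    also have "\<dots> = K * b^m" using b by (simp add: K_def Suc)
    finally show ?thesis .
  qed
  then show ?thesis using that b K by blast
qed

lemma fin_int:
  assumes p: "p \<in> S" and b: "0 < b" "b < 1" and K: "0 \<le> K"
    and mb: "\<And>m. measure (bf_space p) {\<omega>. stop_time \<tau> \<omega> = enat m} \<le> K * b^m"
    and s: "0 \<le> s" "s * b < 1"
  shows "(\<integral>\<^sup>+\<omega>. ennreal (real (Nn \<omega>) * s ^ Nn \<omega>) \<partial>bf_space p) < \<infinity>"
proof -
  interpret P: prob_space "bf_space p" by (rule prob_space_bf)
  have "(\<integral>\<^sup>+\<omega>. ennreal (real (Nn \<omega>) * s ^ Nn \<omega>) \<partial>bf_space p) =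
        (\<integral>\<^sup>+\<omega>. caseF (\<lambda>m x. ennreal (real m * s ^ m)) \<omega> \<partial>bf_space p)"
    by (subst caseF_fin[OF fin[OF p]]) simp
  also have "\<dots> = (\<Sum>m. \<integral>\<^sup>+\<omega>. gF (\<lambda>m x. ennreal (real m * s ^ m)) m (restrict \<omega> {..<m}) \<partial>bf_space p)"
    by (rule nn_caseF) simp
  also have "\<dots> \<le> (\<Sum>m. ennreal (K * (real m * (s * b) ^ m)))"
  proof (intro suminf_le summableI)
    fix m
    have "(\<integral>\<^sup>+\<omega>. gF (\<lambda>m x. ennreal (real m * s ^ m)) m (restrict \<omega> {..<m}) \<partial>bf_space p) =
          (\<integral>\<^sup>+\<omega>. ennreal (real m * s ^ m) * indicator {\<omega>. stop_time \<tau> \<omega> = enat m} \<omega> \<partial>bf_space p)"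
      by (intro nn_integral_cong) (simp add: gF_def stop_time_eq indicator_def)
    also have "\<dots> = ennreal (real m * s ^ m) * emeasure (bf_space p) {\<omega>. stop_time \<tau> \<omega> = enat m}"
      using stop_eq_set_meas by (simp add: nn_integral_cmult_indicator)
    also have "\<dots> \<le> ennreal (real m * s ^ m) * ennreal (K * b^m)"
      using mb[of m] by (intro mult_left_mono) (auto simp: P.emeasure_eq_measure intro!: ennreal_leI)
    also have "\<dots> = ennreal (K * (real m * (s * b) ^ m))"
      using s K b by (subst ennreal_mult[symmetric]) (auto simp: power_mult_distrib algebra_simps)
    finally show "(\<integral>\<^sup>+\<omega>. gF (\<lambda>m x. ennreal (real m * s ^ m)) m (restrict \<omega> {..<m}) \<partial>bf_space p) \<le> \<dots>" .
  qed
  also have "\<dots> = ennreal (\<Sum>m. K * (real m * (s * b) ^ m))"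
    using s b K summable_n_pow[of "s * b"]
    by (intro suminf_ennreal2) (auto intro: summable_mult)
  also have "\<dots> < \<infinity>" by simp
  finally show ?thesis .
qed

end

lemma Lf_bound:
  assumes "0 < p" "p < 1" "0 \<le> q" "q \<le> 1" "1 \<le> r" "\<bar>q - p\<bar> \<le> (r - 1) * min p (1 - p)"
  shows "Lf q p n \<omega> \<le> r ^ n"
proof -
  have m1: "(r - 1) * min p (1 - p) \<le> (r - 1) * p" using assms by (intro mult_left_mono) auto
  have m2: "(r - 1) * min p (1 - p) \<le> (r - 1) * (1 - p)" using assms by (intro mult_left_mono) auto
  have "rho q p b \<le> r" for b
  proof (cases b)
    case True
    have "q \<le> r * p" using assms m1 by (auto simp: algebra_simps)
    then show ?thesis using True assms by (simp add: rho_def divide_le_eq)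
  next
    case False
    have "1 - q \<le> r * (1 - p)" using assms m2 by (auto simp: algebra_simps)
    then show ?thesis using False assms by (simp add: rho_def divide_le_eq)
  qed
  then have "Lf q p n \<omega> \<le> (\<Prod>i<n. r)"
    unfolding Lf_def using assms by (intro prod_mono) (auto simp: rho_nonneg)
  then show ?thesis by simp
qed

lemma rho_tendsto: assumes "X \<longlonglongrightarrow> p" "0 < p" "p < 1" shows "(\<lambda>k. rho (X k) p b) \<longlonglongrightarrow> 1"
proof (cases b)
  case True
  have "(\<lambda>k. X k / p) \<longlonglongrightarrow> p / p" using assms by (intro tendsto_intros) auto
  then show ?thesis using assms by (simp add: rho_def True)
next
  case False
  have "(\<lambda>k. (1 - X k) / (1 - p)) \<longlonglongrightarrow> (1 - p) / (1 - p)" using assms by (intro tendsto_intros) auto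
  then show ?thesis using assms by (simp add: rho_def False)
qed

locale fac3 = fac2 +
  assumes openS: "open S"
  and f01: "\<And>p. p \<in> S \<Longrightarrow> 0 < f p \<and> f p < 1"
  and diff: "\<And>p. p \<in> S \<Longrightarrow> f differentiable (at p)"
  and fast: "\<And>p. p \<in> S \<Longrightarrow> \<exists>A>0. \<exists>\<beta><1. \<forall>n::nat.
        measure (bf_space p) {\<omega> \<in> space (bf_space p). stop_time \<tau> \<omega> > enat n} \<le> A * \<beta> ^ n"
begin

lemma main_thm:
  assumes p: "p \<in> S"
  shows "ennreal ((deriv f p)\<^sup>2 * (p * (1 - p)) / (f p * (1 - f p)))
                 \<le> (\<integral>\<^sup>+ \<omega>. ennreal_of_enat (stop_time \<tau> \<omega>) \<partial>bf_space p)"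
proof -
  interpret P: prob_space "bf_space p" by (rule prob_space_bf)
  note p01 = S01[OF p]
  obtain A \<beta> where A: "A > 0" "\<beta> < 1" and fA: "\<forall>n::nat.
        measure (bf_space p) {\<omega> \<in> space (bf_space p). stop_time \<tau> \<omega> > enat n} \<le> A * \<beta> ^ n"
    using fast[OF p] by blast
  obtain K b where b: "0 < b" "b < 1" and K: "0 \<le> K"
    and mb: "\<And>m. measure (bf_space p) {\<omega>. stop_time \<tau> \<omega> = enat m} \<le> K * b^m"
    using fast_bound[OF fA A] by blast
  define s where "s = (1 + 1/b) / 2"
  have s1: "1 < s" using b by (simp add: s_def field_simps)
  have sb: "s * b < 1" using b by (simp add: s_def field_simps)
  define r where "r = sqrt s"
  have r1: "1 < r" using s1 by (simp add: r_def)
  have r2: "r^2 = s" using s1 by (simp add: r_def)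
  define \<eta> where "\<eta> = (r - 1) * min p (1 - p)"
  have \<eta>0: "0 < \<eta>" using r1 p01 by (simp add: \<eta>_def)
  obtain e where e: "e > 0" "ball p e \<subseteq> S" using openS p by (meson openE)
  define d where "d = min (e/2) \<eta>"
  have d: "0 < d" "d < e" "d \<le> \<eta>" using e \<eta>0 by (auto simp: d_def)
  define h where "h k = d * inverse (real (Suc k))" for k
  define qk where "qk k = p + h k" for k
  have h: "0 < h k" "h k \<le> d" for k using d by (auto simp: h_def field_simps)
  have qkS: "qk k \<in> S" for k
  proof -
    have "dist p (qk k) < e" using h[of k] d by (simp add: qk_def dist_real_def)
    then show ?thesis using e by auto
  qed
  have qk01: "0 < qk k" "qk k < 1" for k using S01[OF qkS] by auto
  have qk\<eta>: "\<bar>qk k - p\<bar> \<le> (r - 1) * min p (1 - p)" for k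
    using h[of k] d by (simp add: qk_def \<eta>_def)
  have hlim: "h \<longlonglongrightarrow> 0"
    unfolding h_def using tendsto_mult_right_zero[OF LIMSEQ_inverse_real_of_nat, of d]
    by (simp add: mult.commute)
  have qklim: "qk \<longlonglongrightarrow> p"
    unfolding qk_def[abs_def] using tendsto_add[OF tendsto_const hlim, of p] by simp
  define D where "D = deriv f p"
  have "DERIV f p :> D" unfolding D_def using diff[OF p] by (simp add: DERIV_deriv_iff_real_differentiable)
  then have Dlim: "((\<lambda>t. (f (p + t) - f p) / t) \<longlongrightarrow> D) (at 0)" by (simp add: DERIV_def)
  have hne: "h k \<noteq> 0" for k using h(1)[of k] by simp
  have hfilt: "filterlim h (at 0) sequentially"
    unfolding filterlim_at by (intro conjI always_eventually allI hlim) (use hne in auto)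
  have LHSlim: "(\<lambda>k. ((f (qk k) - f p) / h k)^2) \<longlonglongrightarrow> D^2"
    unfolding qk_def by (intro tendsto_power filterlim_compose[OF Dlim hfilt])
  have cclim: "(\<lambda>k. cc (qk k) p) \<longlonglongrightarrow> cc p p"
    unfolding cc_def by (intro tendsto_intros qklim) (use p01 in auto)
  have ccpp: "cc p p = 1" using p01 by (simp add: cc_def power2_eq_square)
  have qqlim: "(\<lambda>k. qq (qk k) p) \<longlonglongrightarrow> p"
  proof -
    have "(\<lambda>k. qq (qk k) p) \<longlonglongrightarrow> p^2 / (p * cc p p)"
      unfolding qq_def by (intro tendsto_intros qklim cclim) (use p01 ccpp in auto)
    then show ?thesis using ccpp p01 by (simp add: power2_eq_square)
  qed
  have evqq: "eventually (\<lambda>k. qq (qk k) p \<in> S) sequentially"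
    by (rule topological_tendstoD[OF qqlim openS p])
  define w where "w \<omega> = real (Nn \<omega>) * s ^ Nn \<omega>" for \<omega>
  have wfin: "(\<integral>\<^sup>+\<omega>. ennreal (w \<omega>) \<partial>bf_space p) < \<infinity>"
    unfolding w_def using s1 sb by (intro fin_int[OF p b K mb]) auto
  have wm[measurable]: "w \<in> borel_measurable (bf_space p)"
    unfolding w_def by (rule Nn_fun_meas[where h = "\<lambda>n. real n * s ^ n"])
  have iw: "integrable (bf_space p) w"
    using wfin s1 by (intro integrableI_nonneg wm) (auto simp: w_def)
  have Nm[measurable]: "(\<lambda>\<omega>. real (Nn \<omega>)) \<in> borel_measurable (bf_space p)" by (rule Nn_real_meas)
  have Gm[measurable]: "\<And>k. G (qk k) p \<in> borel_measurable (bf_space p)" by (rule G_meas)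
  have bound: "\<bar>real (Nn \<omega>) * (G (qk k) p \<omega>)^2\<bar> \<le> w \<omega>" for k \<omega>
  proof -
    have G0: "0 \<le> G (qk k) p \<omega>" using p01 qk01[of k] by (simp add: G_def Lf_nonneg)
    have "G (qk k) p \<omega> \<le> r ^ Nn \<omega>"
      unfolding G_def using p01 qk01[of k] r1 qk\<eta>[of k] by (intro Lf_bound) auto
    then have "(G (qk k) p \<omega>)^2 \<le> (r ^ Nn \<omega>)^2" using G0 by (intro power_mono) auto
    also have "\<dots> = s ^ Nn \<omega>" using r2 by (simp add: power_mult[symmetric] mult.commute power_mult)
    finally have "(G (qk k) p \<omega>)^2 \<le> s ^ Nn \<omega>" .
    then show ?thesis using G0 by (simp add: w_def mult_left_mono)
  qed
  have ptw: "(\<lambda>k. real (Nn \<omega>) * (G (qk k) p \<omega>)^2) \<longlonglongrightarrow> real (Nn \<omega>)" for \<omega>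
  proof -
    have "(\<lambda>k. G (qk k) p \<omega>) \<longlonglongrightarrow> (\<Prod>i<Nn \<omega>. 1)"
      unfolding G_def Lf_def by (intro tendsto_prod rho_tendsto qklim p01)
    then have "(\<lambda>k. real (Nn \<omega>) * (G (qk k) p \<omega>)^2) \<longlonglongrightarrow> real (Nn \<omega>) * 1^2"
      by (intro tendsto_intros) simp
    then show ?thesis by simp
  qed
  have lim_ae: "AE \<omega> in bf_space p. (\<lambda>k. real (Nn \<omega>) * (G (qk k) p \<omega>)^2) \<longlonglongrightarrow> real (Nn \<omega>)"
    by (rule AE_I2) (rule ptw)
  have bnd: "AE \<omega> in bf_space p. norm (real (Nn \<omega>) * (G (qk k) p \<omega>)^2) \<le> w \<omega>" for k
    by (rule AE_I2) (simp only: real_norm_def bound)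
  have sm: "(\<lambda>\<omega>. real (Nn \<omega>) * (G (qk k) p \<omega>)^2) \<in> borel_measurable (bf_space p)" for k
    by measurable
  have Ilim: "(\<lambda>k. \<integral>\<omega>. real (Nn \<omega>) * (G (qk k) p \<omega>)^2 \<partial>bf_space p) \<longlonglongrightarrow> (\<integral>\<omega>. real (Nn \<omega>) \<partial>bf_space p)"
    by (rule integral_dominated_convergence[OF Nm sm iw lim_ae bnd])
  have iN: "integrable (bf_space p) (\<lambda>\<omega>. real (Nn \<omega>))"
    by (rule integrable_dominated_convergence[OF Nm sm iw lim_ae bnd])
  define E where "E = (\<integral>\<omega>. real (Nn \<omega>) \<partial>bf_space p)"
  define C where "C = f p * (1 - f p) / (p * (1 - p))"
  have ev: "eventually (\<lambda>k. ((f (qk k) - f p) / h k)^2 \<le> C * (\<integral>\<omega>. real (Nn \<omega>) * (G (qk k) p \<omega>)^2 \<partial>bf_space p)) sequentially"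
    using evqq
  proof eventually_elim
    case (elim k)
    have fin: "(\<integral>\<^sup>+\<omega>. ennreal (real (Nn \<omega>) * (G (qk k) p \<omega>)^2) \<partial>bf_space p) < \<infinity>"
    proof (rule le_less_trans[OF _ wfin])
      show "(\<integral>\<^sup>+\<omega>. ennreal (real (Nn \<omega>) * (G (qk k) p \<omega>)^2) \<partial>bf_space p) \<le> (\<integral>\<^sup>+\<omega>. ennreal (w \<omega>) \<partial>bf_space p)"
        using bound by (intro nn_integral_mono ennreal_leI) (auto simp: abs_le_iff)
    qed
    have mi: "(f (qk k) - f p)^2 \<le> f p * (1 - f p) * (cc (qk k) p - 1) * (\<integral>\<omega>. real (Nn \<omega>) * (G (qk k) p \<omega>)^2 \<partial>bf_space p)"
      by (rule main_ineq[OF p qkS elim fin])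
    have cce: "cc (qk k) p - 1 = (h k)^2 / (p * (1 - p))"
      using cc_minus_1[OF p01, of "qk k"] by (simp add: qk_def)
    have hk: "0 < (h k)^2" using h[of k] by simp
    have "((f (qk k) - f p) / h k)^2 = (f (qk k) - f p)^2 / (h k)^2" by (simp add: power_divide)
    also have "\<dots> \<le> (f p * (1 - f p) * (cc (qk k) p - 1) * (\<integral>\<omega>. real (Nn \<omega>) * (G (qk k) p \<omega>)^2 \<partial>bf_space p)) / (h k)^2"
      using mi hk by (intro divide_right_mono) auto
    also have "\<dots> = C * (\<integral>\<omega>. real (Nn \<omega>) * (G (qk k) p \<omega>)^2 \<partial>bf_space p)"
    proof -
      have pz: "p - p * p \<noteq> 0" "p * (1 - p) \<noteq> 0" using p01 by (auto simp: algebra_simps)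
      have hz: "(h k)^2 \<noteq> 0" using hk by simp
      show ?thesis using pz hz by (simp add: cce C_def field_simps)
    qed
    finally show ?case .
  qed
  have DC: "D^2 \<le> C * E"
    unfolding E_def by (rule tendsto_le[OF sequentially_bot tendsto_mult[OF tendsto_const Ilim] LHSlim ev])
  have fp: "0 < f p * (1 - f p)" using f01[OF p] by simp
  have pp: "0 < p * (1 - p)" using p01 by simp
  have "D^2 * (p * (1 - p)) / (f p * (1 - f p)) \<le> C * E * (p * (1 - p)) / (f p * (1 - f p))"
    using DC fp pp by (intro divide_right_mono mult_right_mono) auto
  also have "\<dots> = E"
  proof -
    have c: "C * (p * (1 - p)) = f p * (1 - f p)" using pp p01 by (simp add: C_def)
    have "C * E * (p * (1 - p)) / (f p * (1 - f p)) = E * (C * (p * (1 - p))) / (f p * (1 - f p))"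
      by (simp add: ac_simps)
    also have "\<dots> = E" using c fp f01[OF p] by simp
    finally show ?thesis .
  qed
  finally have DE: "D^2 * (p * (1 - p)) / (f p * (1 - f p)) \<le> E" .
  have "(\<integral>\<^sup>+ \<omega>. ennreal_of_enat (stop_time \<tau> \<omega>) \<partial>bf_space p) = (\<integral>\<^sup>+ \<omega>. ennreal (real (Nn \<omega>)) \<partial>bf_space p)"
    by (intro nn_integral_cong_AE, use fin[OF p] in eventually_elim)
       (auto simp: Nn_def ennreal_of_nat_eq_real_of_nat)
  also have "\<dots> = ennreal E"
    unfolding E_def by (rule nn_integral_eq_integral[OF iN]) auto
  finally show ?thesis using DE unfolding D_def by (simp add: ennreal_leI)
qed

end

theorem theorem3:
  fixes S :: "real set" and f :: "real \<Rightarrow> real"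
    and \<tau> \<gamma> :: "nat \<Rightarrow> (nat \<Rightarrow> bool \<times> real) \<Rightarrow> bool"
  assumes "open S" and "S \<subseteq> {0<..<1}"
    and "\<forall>p\<in>S. 0 < f p \<and> f p < 1"
    and "\<forall>p\<in>S. f differentiable (at p)"
    and "bernoulli_factory S f \<tau> \<gamma>"
    and "fast_factory S \<tau>"
  shows "\<forall>p\<in>S. ennreal ((deriv f p)\<^sup>2 * (p * (1 - p)) / (f p * (1 - f p)))
                 \<le> (\<integral>\<^sup>+ \<omega>. ennreal_of_enat (stop_time \<tau> \<omega>) \<partial>bf_space p)"
proof -
  interpret fac3 \<tau> \<gamma> S f
  proof (unfold_locales)
    show "\<And>i. \<tau> i \<in> prefix_space i \<rightarrow>\<^sub>M count_space UNIV"
      using assms(5) by (simp add: bernoulli_factory_def)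
    show "\<And>n. \<gamma> n \<in> prefix_space n \<rightarrow>\<^sub>M count_space UNIV"
      using assms(5) by (simp add: bernoulli_factory_def)
    show "S \<subseteq> {0<..<1}" by (rule assms(2))
    show "\<And>p. p \<in> S \<Longrightarrow> AE \<omega> in bf_space p. stop_time \<tau> \<omega> \<noteq> \<infinity>"
      using assms(5) by (simp add: bernoulli_factory_def)
    show "\<And>p. p \<in> S \<Longrightarrow> measure (bf_space p)
         {\<omega> \<in> space (bf_space p). \<exists>n. stop_time \<tau> \<omega> = enat n \<and> \<gamma> n (restrict \<omega> {..<n})} = f p"
      using assms(5) by (simp add: bernoulli_factory_def)
    show "open S" by (rule assms(1))
    show "\<And>p. p \<in> S \<Longrightarrow> 0 < f p \<and> f p < 1" using assms(3) by blast
    show "\<And>p. p \<in> S \<Longrightarrow> f differentiable (at p)" using assms(4) by blast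
    show "\<And>p. p \<in> S \<Longrightarrow> \<exists>A>0. \<exists>\<beta><1. \<forall>n::nat.
        measure (bf_space p) {\<omega> \<in> space (bf_space p). stop_time \<tau> \<omega> > enat n} \<le> A * \<beta> ^ n"
      using assms(6) by (simp add: fast_factory_def)
  qed
  show ?thesis using main_thm by blast
qed

end
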